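(* Let $A\le B$ be quasi-copulas on $[0,1]^2$ such that $\mathcal{C}(A,B)=\{C: C\text{ copula},\ A\le C\le B\}$ is nonempty. Then: (a) $B=\bigvee\mathcal{C}(A,B)$ (pointwise supremum) if and only if $B(\mathbf{x})-A(\mathbf{x})\le P_O^{(A,B)}(\mathbf{x})$ for all $\mathbf{x}\in[0,1]^2$; (b) $A=\bigwedge\mathcal{C}(A,B)$ (pointwise infimum) if and only if $B(\mathbf{x})-A(\mathbf{x})\le P_M^{(A,B)}(\mathbf{x})$ for all $\mathbf{x}\in[0,1]^2$.
   Context: For $Q:[0,1]^2\to\mathbb{R}$, $V_Q([s_1,s_2]\times[t_1,t_2])=Q(s_1,t_1)+Q(s_2,t_2)-Q(s_2,t_1)-Q(s_1,t_2)$. A copula is grounded ($Q(x,0)=Q(0,y)=0$), has neutral element 1 ($Q(x,1)=x$, $Q(1,y)=y$), and $V_Q(R)\ge0$ for all rectangles; a quasi-copula is grounded, has neutral element 1, and $V_Q(R)\ge0$ for rectangles having a side on the boundary of $[0,1]^2$. A rectangle is $[s_1,s_2]\times[t_1,t_2]\subseteq[0,1]^2$ with $s_1<s_2$, $t_1<t_2$; main corners: southwest and northeast; opposite corners: southeast and northwest. $\mathfrak{R}$: finite formal unions $R=R_1\sqcup\dots\sqcup R_n$ of rectangles (repetitions allowed), with multiplicity $m_R(\mathbf{y})=\sum_i m_{R_i}(\mathbf{y})$, where $m_{R_i}(\mathbf{y})$ is $1$ at main corners, $-1$ at opposite corners, $0$ elsewhere. $L^{(A,B)}(R)=\sum_{m_R(\mathbf{y})>0}B(\mathbf{y})m_R(\mathbf{y})+\sum_{m_R(\mathbf{y})<0}A(\mathbf{y})m_R(\mathbf{y})$;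 $P_M^{(A,B)}(\mathbf{x})=\inf\{L^{(A,B)}(R)/m_R(\mathbf{x}):R\in\mathfrak{R},m_R(\mathbf{x})>0\}$; $P_O^{(A,B)}(\mathbf{x})=\inf\{L^{(A,B)}(R)/(-m_R(\mathbf{x})):R\in\mathfrak{R},m_R(\mathbf{x})<0\}$; $\inf\emptyset=+\infty$. *)

theory Defs
  imports "HOL-Analysis.Analysis" "HOL-Library.Extended_Real"
begin

type_synonym pt = "real \<times> real"

definition unit_sq :: "pt set" where
  "unit_sq = {0..1} \<times> {0..1}"

text \<open>A rectangle [s1,s2] x [t1,t2] is encoded as the tuple (s1,s2,t1,t2).\<close>
type_synonym rect = "real \<times> real \<times> real \<times> real"

definition is_rect :: "rect \<Rightarrow> bool" where
  "is_rect r = (case r of (s1,s2,t1,t2) \<Rightarrow>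
      0 \<le> s1 \<and> s1 < s2 \<and> s2 \<le> 1 \<and> 0 \<le> t1 \<and> t1 < t2 \<and> t2 \<le> 1)"

definition Vol :: "(pt \<Rightarrow> real) \<Rightarrow> rect \<Rightarrow> real" where
  "Vol Q r = (case r of (s1,s2,t1,t2) \<Rightarrow>
      Q (s1,t1) + Q (s2,t2) - Q (s2,t1) - Q (s1,t2))"

definition grounded :: "(pt \<Rightarrow> real) \<Rightarrow> bool" where
  "grounded Q = (\<forall>x\<in>{0..1}. Q (x,0) = 0 \<and> Q (0,x) = 0)"

definition neutral1 :: "(pt \<Rightarrow> real) \<Rightarrow> bool" where
  "neutral1 Q = (\<forall>x\<in>{0..1}. Q (x,1) = x \<and> Q (1,x) = x)"

definition copula :: "(pt \<Rightarrow> real) \<Rightarrow> bool" where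
  "copula Q = (grounded Q \<and> neutral1 Q \<and> (\<forall>r. is_rect r \<longrightarrow> Vol Q r \<ge> 0))"

definition boundary_rect :: "rect \<Rightarrow> bool" where
  "boundary_rect r = (case r of (s1,s2,t1,t2) \<Rightarrow> s1 = 0 \<or> s2 = 1 \<or> t1 = 0 \<or> t2 = 1)"

definition quasi_copula :: "(pt \<Rightarrow> real) \<Rightarrow> bool" where
  "quasi_copula Q = (grounded Q \<and> neutral1 Q \<and>
      (\<forall>r. is_rect r \<and> boundary_rect r \<longrightarrow> Vol Q r \<ge> 0))"

definition mult_rect :: "rect \<Rightarrow> pt \<Rightarrow> int" where
  "mult_rect r y = (case r of (s1,s2,t1,t2) \<Rightarrow>
      if y = (s1,t1) \<or> y = (s2,t2) then 1
      else if y = (s2,t1) \<or> y = (s1,t2) then -1 else 0)"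

definition corners :: "rect \<Rightarrow> pt set" where
  "corners r = (case r of (s1,s2,t1,t2) \<Rightarrow> {(s1,t1),(s2,t2),(s2,t1),(s1,t2)})"

text \<open>Formal unions of rectangles (repetitions allowed) are lists of rectangles.\<close>
definition formal_union :: "rect list \<Rightarrow> bool" where
  "formal_union R = (\<forall>r\<in>set R. is_rect r)"

definition mult :: "rect list \<Rightarrow> pt \<Rightarrow> int" where
  "mult R y = (\<Sum>r\<leftarrow>R. mult_rect r y)"

definition Lfun :: "(pt \<Rightarrow> real) \<Rightarrow> (pt \<Rightarrow> real) \<Rightarrow> rect list \<Rightarrow> real" where
  "Lfun A B R =
     (\<Sum>y\<in>{y\<in>(\<Union>r\<in>set R. corners r). mult R y > 0}. B y * of_int (mult R y))
   + (\<Sum>y\<in>{y\<in>(\<Union>r\<in>set R. corners r). mult R y < 0}. A y * of_int (mult R y))"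

definition P_M :: "(pt \<Rightarrow> real) \<Rightarrow> (pt \<Rightarrow> real) \<Rightarrow> pt \<Rightarrow> ereal" where
  "P_M A B x = Inf {ereal (Lfun A B R / of_int (mult R x)) | R. formal_union R \<and> mult R x > 0}"

definition P_O :: "(pt \<Rightarrow> real) \<Rightarrow> (pt \<Rightarrow> real) \<Rightarrow> pt \<Rightarrow> ereal" where
  "P_O A B x = Inf {ereal (Lfun A B R / of_int (- mult R x)) | R. formal_union R \<and> mult R x < 0}"

definition copulas_between :: "(pt \<Rightarrow> real) \<Rightarrow> (pt \<Rightarrow> real) \<Rightarrow> (pt \<Rightarrow> real) set" where
  "copulas_between A B = {C. copula C \<and> (\<forall>x\<in>unit_sq. A x \<le> C x \<and> C x \<le> B x)}"

end

theory Submission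
  imports Defs
begin


inductive_set cone :: "(('v \<Rightarrow> int) \<times> real) set \<Rightarrow> (('v \<Rightarrow> int) \<times> real) set" for K where
  cone_zero: "((\<lambda>v. 0), 0) \<in> cone K"
| cone_add: "(a,b) \<in> K \<Longrightarrow> (a',b') \<in> cone K \<Longrightarrow> ((\<lambda>v. a v + a' v), b + b') \<in> cone K"

lemma cone_sum:
  assumes "(a,b) \<in> cone K" "(a',b') \<in> cone K"
  shows "((\<lambda>v. a v + a' v), b + b') \<in> cone K"
  using assms
proof (induction rule: cone.induct)
  case cone_zero
  then show ?case by simp
next
  case (cone_add a b a2 b2)
  have "((\<lambda>v. a v + (\<lambda>v. a2 v + a' v) v), b + (b2 + b')) \<in> cone K"
    by (rule cone.cone_add[OF cone_add(1) cone_add(3)[OF cone_add(4)]])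
  then show ?case by (simp add: add.assoc)
qed

lemma cone_single: "(a,b) \<in> K \<Longrightarrow> (a,b) \<in> cone K"
  using cone_add[OF _ cone_zero, of a b K] by simp

lemma cone_smult:
  assumes "(a,b) \<in> K"
  shows "((\<lambda>v. int n * a v), real n * b) \<in> cone K"
proof (induction n)
  case 0
  then show ?case using cone_zero by simp
next
  case (Suc n)
  have "((\<lambda>v. a v + int n * a v), b + real n * b) \<in> cone K"
    by (rule cone_add[OF assms Suc])
  then show ?case by (simp add: algebra_simps)
qed

lemma cone_mono:
  assumes "K' \<subseteq> cone K" "(a,b) \<in> cone K'"
  shows "(a,b) \<in> cone K"
  using assms(2)
proof (induction rule: cone.induct)
  case cone_zero
  then show ?case by (rule cone.cone_zero)
next
  case (cone_add a b a' b')
  then show ?case using cone_sum assms(1) by blast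
qed

lemma farkas:
  fixes K :: "(('v \<Rightarrow> int) \<times> real) set"
  assumes "finite V" "finite K" "\<forall>(a,b)\<in>K. \<forall>v. v \<notin> V \<longrightarrow> a v = 0"
  shows "(\<exists>x. \<forall>(a,b)\<in>K. (\<Sum>v\<in>V. of_int (a v) * x v) \<le> b) \<or> (\<exists>b<0. ((\<lambda>v. 0), b) \<in> cone K)"
  using assms
proof (induction V arbitrary: K rule: finite_induct)
  case empty
  show ?case
  proof (cases "\<forall>(a,b)\<in>K. 0 \<le> b")
    case True
    then show ?thesis by auto
  next
    case False
    then obtain a b where ab: "(a,b) \<in> K" "b < 0" by auto
    have "a = (\<lambda>v. 0)" using empty(2) ab(1) by (intro ext) fastforce
    with ab cone_single[OF ab(1)] show ?thesis by auto
  qed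
next
  case (insert u V)
  define P where "P = {c\<in>K. fst c u > 0}"
  define N where "N = {c\<in>K. fst c u < 0}"
  define Z where "Z = {c\<in>K. fst c u = 0}"
  define comb :: "(('v \<Rightarrow> int) \<times> real) \<Rightarrow> (('v \<Rightarrow> int) \<times> real) \<Rightarrow> (('v \<Rightarrow> int) \<times> real)"
    where "comb p n = ((\<lambda>v. (- fst n u) * fst p v + fst p u * fst n v),
        real_of_int (- fst n u) * snd p + real_of_int (fst p u) * snd n)" for p n
  define K' where "K' = Z \<union> (\<lambda>(p,n). comb p n) ` (P \<times> N)"
  have finP: "finite P" "finite N" "finite Z" using insert(4) by (auto simp: P_def N_def Z_def)
  have finK': "finite K'" using finP by (simp add: K'_def)
  have van': "\<forall>(a,b)\<in>K'. \<forall>v. v \<notin> V \<longrightarrow> a v = 0"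
  proof (clarify)
    fix a b v assume "(a,b) \<in> K'" "v \<notin> V"
    then show "a v = 0"
    proof (cases "(a,b) \<in> Z")
      case True
      then show ?thesis using insert(5) \<open>v \<notin> V\<close> by (cases "v = u") (auto simp: Z_def)
    next
      case False
      with \<open>(a,b) \<in> K'\<close> obtain p n where pn: "p \<in> P" "n \<in> N" "(a,b) = comb p n"
        by (auto simp: K'_def)
      have "p \<in> K" "n \<in> K" using pn by (auto simp: P_def N_def)
      then have "v \<noteq> u \<Longrightarrow> fst p v = 0 \<and> fst n v = 0" using insert(5) \<open>v \<notin> V\<close> by auto
      then show ?thesis using pn(3) by (cases "v = u") (auto simp: comb_def)
    qed
  qed
  have K'cone: "K' \<subseteq> cone K"
  proof
    fix c assume "c \<in> K'"
    then show "c \<in> cone K"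
    proof (cases "c \<in> Z")
      case True
      then show ?thesis using cone_single[of "fst c" "snd c" K] by (auto simp: Z_def)
    next
      case False
      with \<open>c \<in> K'\<close> obtain p n where pn: "p \<in> P" "n \<in> N" "c = comb p n"
        by (auto simp: K'_def)
      obtain ap bp where p: "p = (ap,bp)" by force
      obtain an bn where n: "n = (an,bn)" by force
      have pK: "(ap,bp) \<in> K" "ap u > 0" using pn p by (auto simp: P_def)
      have nK: "(an,bn) \<in> K" "an u < 0" using pn n by (auto simp: N_def)
      have 1: "((\<lambda>v. int (nat (- an u)) * ap v), real (nat (- an u)) * bp) \<in> cone K"
        by (rule cone_smult[OF pK(1)])
      have 2: "((\<lambda>v. int (nat (ap u)) * an v), real (nat (ap u)) * bn) \<in> cone K"
        by (rule cone_smult[OF nK(1)])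
      have "((\<lambda>v. int (nat (- an u)) * ap v + int (nat (ap u)) * an v),
              real (nat (- an u)) * bp + real (nat (ap u)) * bn) \<in> cone K"
        using cone_sum[OF 1 2] by simp
      moreover have "int (nat (- an u)) = - an u" "int (nat (ap u)) = ap u"
        using pK nK by auto
      moreover have "real (nat (- an u)) = real_of_int (- an u)" "real (nat (ap u)) = real_of_int (ap u)"
        using pK nK by auto
      ultimately show ?thesis using pn(3) p n by (simp add: comb_def)
    qed
  qed
  from insert(3)[OF finK' van'] show ?case
  proof
    assume "\<exists>b<0. ((\<lambda>v. 0), b) \<in> cone K'"
    then show ?case using cone_mono[OF K'cone] by blast
  next
    assume "\<exists>x. \<forall>(a,b)\<in>K'. (\<Sum>v\<in>V. of_int (a v) * x v) \<le> b"
    then obtain x where x: "\<forall>(a,b)\<in>K'. (\<Sum>v\<in>V. of_int (a v) * x v) \<le> b" by blast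
    define r where "r a = (\<Sum>v\<in>V. of_int (a v) * x v)" for a :: "'v \<Rightarrow> int"
    define bnd where "bnd c = (snd c - r (fst c)) / real_of_int (fst c u)" for c :: "('v \<Rightarrow> int) \<times> real"
    define t where "t = (if N \<noteq> {} then Max (bnd ` N) else if P \<noteq> {} then Min (bnd ` P) else 0)"
    have pair: "bnd n \<le> bnd p" if "p \<in> P" "n \<in> N" for p n
    proof -
      have "comb p n \<in> K'" using that by (auto simp: K'_def)
      then have "r (fst (comb p n)) \<le> snd (comb p n)" using x unfolding r_def by (cases "comb p n") auto
      moreover have "r (fst (comb p n)) = real_of_int (- fst n u) * r (fst p) + real_of_int (fst p u) * r (fst n)"
        unfolding r_def comb_def sum_distrib_left sum.distrib[symmetric] by (intro sum.cong) (auto simp: algebra_simps)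
      ultimately have ineq: "real_of_int (- fst n u) * r (fst p) + real_of_int (fst p u) * r (fst n)
          \<le> real_of_int (- fst n u) * snd p + real_of_int (fst p u) * snd n"
        by (simp add: comb_def)
      have pu: "real_of_int (fst p u) > 0" and nu: "real_of_int (fst n u) < 0"
        using that by (auto simp: P_def N_def)
      show ?thesis unfolding bnd_def
        using ineq pu nu by (simp add: field_simps)
    qed
    have tlow: "bnd n \<le> t" if "n \<in> N" for n
      using that finP by (auto simp: t_def)
    have tup: "t \<le> bnd p" if "p \<in> P" for p
    proof (cases "N = {}")
      case True
      then show ?thesis using that finP by (auto simp: t_def)
    next
      case False
      then have "Max (bnd ` N) \<in> bnd ` N" using finP by (intro Max_in) auto
      then obtain n where "n \<in> N" "t = bnd n" using False by (auto simp: t_def)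
      then show ?thesis using pair[OF that] by simp
    qed
    define x' where "x' = x(u := t)"
    have sumx': "(\<Sum>v\<in>insert u V. of_int (a v) * x' v) = of_int (a u) * t + r a" for a
      using insert(1,2) by (simp add: x'_def r_def) (intro sum.cong; auto)
    have "\<forall>(a,b)\<in>K. (\<Sum>v\<in>insert u V. of_int (a v) * x' v) \<le> b"
    proof (clarify)
      fix a b assume ab: "(a,b) \<in> K"
      show "(\<Sum>v\<in>insert u V. of_int (a v) * x' v) \<le> b"
      proof (cases "a u = 0")
        case True
        then have "(a,b) \<in> K'" using ab by (auto simp: K'_def Z_def)
        then show ?thesis using x True by (force simp add: sumx' r_def)
      next
        case False
        show ?thesis
        proof (cases "a u > 0")
          case True
          then have "(a,b) \<in> P" using ab by (auto simp: P_def)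
          then have "t \<le> (b - r a) / real_of_int (a u)" using tup[of "(a,b)"] by (simp add: bnd_def)
          then have "of_int (a u) * t + r a \<le> b" using True by (simp add: field_simps)
          then show ?thesis by (simp only: sumx')
        next
          case f2: False
          then have "a u < 0" using False by simp
          then have "(a,b) \<in> N" using ab by (auto simp: N_def)
          then have "(b - r a) / real_of_int (a u) \<le> t" using tlow[of "(a,b)"] by (simp add: bnd_def)
          then have "of_int (a u) * t + r a \<le> b" using \<open>a u < 0\<close> by (simp add: field_simps)
          then show ?thesis by (simp only: sumx')
        qed
      qed
    qed
    then show ?case by blast
  qed
qed



definition cornersR :: "rect list \<Rightarrow> pt set" where
  "cornersR R = (\<Union>r\<in>set R. corners r)"

lemma finite_corners[simp]: "finite (corners r)"
  by (cases r) (auto simp: corners_def)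

lemma finite_cornersR[simp]: "finite (cornersR R)"
  by (auto simp: cornersR_def)

lemma cornersR_Cons: "cornersR (r#R) = corners r \<union> cornersR R"
  by (auto simp: cornersR_def)

lemma mult_rect_nz: "mult_rect r y \<noteq> 0 \<Longrightarrow> y \<in> corners r"
  by (cases r) (auto simp: mult_rect_def corners_def split: if_splits)

lemma mult_rect_nz': "y \<notin> corners r \<Longrightarrow> mult_rect r y = 0"
  using mult_rect_nz by blast

lemma mult_Nil[simp]: "mult [] y = 0"
  by (simp add: mult_def)

lemma mult_Cons[simp]: "mult (r#R) y = mult_rect r y + mult R y"
  by (simp add: mult_def)

lemma mult_zero: "y \<notin> cornersR R \<Longrightarrow> mult R y = 0"
  by (induction R) (auto simp: cornersR_def dest: mult_rect_nz)

lemma corners_sq: "is_rect r \<Longrightarrow> corners r \<subseteq> unit_sq"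
  by (cases r) (auto simp: is_rect_def corners_def unit_sq_def)

lemma cornersR_sq: "formal_union R \<Longrightarrow> cornersR R \<subseteq> unit_sq"
  unfolding formal_union_def cornersR_def using corners_sq by blast

lemma Vol_corners:
  assumes "is_rect r"
  shows "Vol Q r = (\<Sum>y\<in>corners r. of_int (mult_rect r y) * Q y)"
proof -
  obtain s1 s2 t1 t2 where r: "r = (s1,s2,t1,t2)" by (cases r) auto
  with assms have "s1 < s2" "t1 < t2" by (auto simp: is_rect_def)
  then show ?thesis using r by (simp add: Vol_def corners_def mult_rect_def)
qed

lemma Vol_sumY:
  assumes "is_rect r" "finite Y" "corners r \<subseteq> Y"
  shows "Vol Q r = (\<Sum>y\<in>Y. of_int (mult_rect r y) * Q y)"
  unfolding Vol_corners[OF assms(1)]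
  by (rule sum.mono_neutral_left) (use assms in \<open>simp_all add: mult_rect_nz'\<close>)

lemma sum_Vol:
  assumes "formal_union R" "finite Y" "cornersR R \<subseteq> Y"
  shows "(\<Sum>r\<leftarrow>R. Vol Q r) = (\<Sum>y\<in>Y. of_int (mult R y) * Q y)"
  using assms
proof (induction R)
  case Nil
  then show ?case by simp
next
  case (Cons r R)
  have "is_rect r" "formal_union R" using Cons(2) by (auto simp: formal_union_def)
  moreover have "corners r \<subseteq> Y" "cornersR R \<subseteq> Y" using Cons(4) by (auto simp: cornersR_Cons)
  ultimately show ?case using Cons Vol_sumY[of r Y Q]
    by (simp add: sum.distrib distrib_right)
qed

definition tmf :: "(pt \<Rightarrow> real) \<Rightarrow> (pt \<Rightarrow> real) \<Rightarrow> int \<Rightarrow> pt \<Rightarrow> real" where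
  "tmf lo hi k y = (if k > 0 then hi y * of_int k else if k < 0 then lo y * of_int k else 0)"

lemma Lfun_sum:
  assumes "finite Y" "cornersR R \<subseteq> Y"
  shows "Lfun lo hi R = (\<Sum>y\<in>Y. tmf lo hi (mult R y) y)"
proof -
  have fin: "finite (cornersR R)" by simp
  have "Lfun lo hi R = (\<Sum>y\<in>cornersR R. (if mult R y > 0 then hi y * of_int (mult R y) else 0))
        + (\<Sum>y\<in>cornersR R. (if mult R y < 0 then lo y * of_int (mult R y) else 0))"
    unfolding Lfun_def cornersR_def[symmetric]
    by (simp add: sum.inter_filter[OF fin])
  also have "\<dots> = (\<Sum>y\<in>cornersR R. tmf lo hi (mult R y) y)"
    unfolding sum.distrib[symmetric] tmf_def by (intro sum.cong) auto
  also have "\<dots> = (\<Sum>y\<in>Y. tmf lo hi (mult R y) y)"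
    by (rule sum.mono_neutral_left) (use assms mult_zero in \<open>auto simp: tmf_def\<close>)
  finally show ?thesis .
qed

lemma tmf_ge:
  assumes "lo y \<le> c" "c \<le> hi y"
  shows "tmf lo hi k y - of_int k * c \<ge> 0"
proof -
  have "k > 0 \<Longrightarrow> hi y * of_int k \<ge> c * of_int k" using assms by (simp add: mult_right_mono)
  moreover have "k < 0 \<Longrightarrow> lo y * of_int k \<ge> c * of_int k" using assms by (simp add: mult_right_mono_neg)
  ultimately show ?thesis by (auto simp: tmf_def algebra_simps)
qed

lemma Lfun_lower:
  assumes R: "formal_union R" and C: "\<forall>r. is_rect r \<longrightarrow> Vol C r \<ge> 0"
    and b: "\<forall>y\<in>unit_sq. lo y \<le> C y \<and> C y \<le> hi y"
  shows "Lfun lo hi R \<ge> tmf lo hi (mult R x) x - of_int (mult R x) * C x"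
proof -
  define Y where "Y = insert x (cornersR R)"
  have fY: "finite Y" "cornersR R \<subseteq> Y" "x \<in> Y" by (auto simp: Y_def)
  have "Lfun lo hi R = (\<Sum>y\<in>Y. tmf lo hi (mult R y) y - of_int (mult R y) * C y)
        + (\<Sum>y\<in>Y. of_int (mult R y) * C y)"
    by (simp add: Lfun_sum[OF fY(1,2)] sum_subtractf)
  also have "(\<Sum>y\<in>Y. of_int (mult R y) * C y) = (\<Sum>r\<leftarrow>R. Vol C r)"
    using sum_Vol[OF R fY(1,2)] by simp
  also have "(\<Sum>r\<leftarrow>R. Vol C r) \<ge> 0"
    using R C by (intro sum_list_nonneg) (auto simp: formal_union_def)
  moreover have "(\<Sum>y\<in>Y. tmf lo hi (mult R y) y - of_int (mult R y) * C y)
      \<ge> tmf lo hi (mult R x) x - of_int (mult R x) * C x"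
  proof (rule member_le_sum[OF fY(3) _ fY(1)])
    fix y assume "y \<in> Y - {x}"
    then have "y \<in> cornersR R" by (auto simp: Y_def)
    then have "y \<in> unit_sq" using cornersR_sq[OF R] by auto
    then show "0 \<le> tmf lo hi (mult R y) y - of_int (mult R y) * C y"
      using b tmf_ge by auto
  qed
  ultimately show ?thesis by linarith
qed

lemma Lfun_nonneg:
  assumes R: "formal_union R" and C: "\<forall>r. is_rect r \<longrightarrow> Vol C r \<ge> 0"
    and b: "\<forall>y\<in>unit_sq. lo y \<le> C y \<and> C y \<le> hi y"
  shows "Lfun lo hi R \<ge> 0"
proof -
  have "(2,2) \<notin> cornersR R" using cornersR_sq[OF R] by (auto simp: unit_sq_def)
  then have "mult R (2,2) = 0" by (rule mult_zero)
  then show ?thesis using Lfun_lower[OF assms, of "(2,2)"] by (simp add: tmf_def)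
qed



lemma seq_mono:
  fixes a :: "nat \<Rightarrow> real"
  assumes "\<forall>i<p. a i < a (Suc i)" "i \<le> j" "j \<le> p"
  shows "a i \<le> a j"
  using assms(2,3)
proof (induction j rule: dec_induct)
  case base then show ?case by simp
next
  case (step n) then show ?case using assms(1) by (metis Suc_le_lessD order.trans less_imp_le)
qed

lemma sum_if_less:
  fixes k p :: nat
  assumes "k \<le> p"
  shows "(\<Sum>i<p. if i < k then f i else 0) = (\<Sum>i<k. (f i :: real))"
  by (rule sum.mono_neutral_cong_right) (use assms in auto)

definition hat :: "(nat \<Rightarrow> real) \<Rightarrow> nat \<Rightarrow> real \<Rightarrow> real" where
  "hat a i s = (min s (a (Suc i)) - min s (a i)) / (a (Suc i) - a i)"

lemma hat_mono:
  assumes "a i < a (Suc i)" "s \<le> s'"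
  shows "hat a i s \<le> hat a i s'"
proof -
  have "min s (a (Suc i)) - min s (a i) \<le> min s' (a (Suc i)) - min s' (a i)"
    using assms by (auto simp: min_def)
  then show ?thesis unfolding hat_def using assms(1) by (simp add: divide_right_mono)
qed

lemma hat_zero:
  assumes "0 \<le> a i" "a i < a (Suc i)"
  shows "hat a i 0 = 0"
  using assms by (simp add: hat_def min_def)

lemma hat_one:
  assumes "a (Suc i) \<le> 1" "a i < a (Suc i)"
  shows "hat a i 1 = 1"
  using assms by (simp add: hat_def min_def)

lemma hat_grid:
  assumes "\<forall>i<p. a i < a (Suc i)" "i < p" "k \<le> p"
  shows "hat a i (a k) = (if i < k then 1 else 0)"
proof (cases "i < k")
  case True
  then have "a (Suc i) \<le> a k" "a i \<le> a k" using seq_mono[OF assms(1)] assms by auto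
  moreover have "a i < a (Suc i)" using assms by auto
  ultimately have "min (a k) (a (Suc i)) = a (Suc i)" "min (a k) (a i) = a i" "a (Suc i) - a i \<noteq> 0"
    by auto
  then show ?thesis using True by (simp add: hat_def)
next
  case False
  then have "a k \<le> a i" using seq_mono[OF assms(1)] assms by auto
  moreover have "a i < a (Suc i)" using assms by auto
  ultimately have "min (a k) (a (Suc i)) = a k" "min (a k) (a i) = a k" by auto
  then show ?thesis using False by (simp add: hat_def)
qed

lemma hat_sum:
  assumes "\<forall>i<p. a i < a (Suc i)" "a 0 = 0" "a p = 1" "0 \<le> s" "s \<le> 1"
  shows "(\<Sum>i<p. hat a i s * (a (Suc i) - a i)) = s"
proof -
  have "(\<Sum>i<p. hat a i s * (a (Suc i) - a i)) = (\<Sum>i<p. min s (a (Suc i)) - min s (a i))"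
    using assms(1) by (intro sum.cong) (auto simp: hat_def)
  also have "\<dots> = min s (a p) - min s (a 0)"
    by (rule sum_lessThan_telescope)
  finally show ?thesis using assms by simp
qed

lemma interp_copula:
  fixes a b :: "nat \<Rightarrow> real" and D :: "pt \<Rightarrow> real"
  assumes am: "\<forall>i<p. a i < a (Suc i)" and a0: "a 0 = 0" and ap: "a p = 1"
    and bm: "\<forall>j<q. b j < b (Suc j)" and b0: "b 0 = 0" and bq: "b q = 1"
    and Dx0: "\<forall>i\<le>p. D (a i, 0) = 0" and Dx1: "\<forall>i\<le>p. D (a i, 1) = a i"
    and D0y: "\<forall>j\<le>q. D (0, b j) = 0" and D1y: "\<forall>j\<le>q. D (1, b j) = b j"
    and Dv: "\<forall>i<p. \<forall>j<q. Vol D (a i, a (Suc i), b j, b (Suc j)) \<ge> 0"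
  shows "\<exists>C. copula C \<and> (\<forall>i\<le>p. \<forall>j\<le>q. C (a i, b j) = D (a i, b j))"
proof -
  define w where "w i j = Vol D (a i, a (Suc i), b j, b (Suc j))" for i j
  define C where "C z = (\<Sum>i<p. \<Sum>j<q. w i j * hat a i (fst z) * hat b j (snd z))" for z
  have apos: "0 \<le> a i" if "i \<le> p" for i using seq_mono[OF am, of 0 i] that a0 by simp
  have ale: "a i \<le> 1" if "i \<le> p" for i using seq_mono[OF am, of i p] that ap by simp
  have bpos: "0 \<le> b j" if "j \<le> q" for j using seq_mono[OF bm, of 0 j] that b0 by simp
  have ble: "b j \<le> 1" if "j \<le> q" for j using seq_mono[OF bm, of j q] that bq by simp
  have wpos: "w i j \<ge> 0" if "i < p" "j < q" for i j using Dv that by (simp add: w_def)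
  have rows: "(\<Sum>j<q. w i j) = a (Suc i) - a i" if "i < p" for i
  proof -
    define g where "g j = D (a (Suc i), b j) - D (a i, b j)" for j
    have "(\<Sum>j<q. w i j) = (\<Sum>j<q. g (Suc j) - g j)"
      by (intro sum.cong) (auto simp: w_def g_def Vol_def)
    also have "\<dots> = g q - g 0" by (rule sum_lessThan_telescope)
    finally show ?thesis using that Dx0 Dx1 b0 bq by (simp add: g_def)
  qed
  have cols: "(\<Sum>i<p. w i j) = b (Suc j) - b j" if "j < q" for j
  proof -
    define g where "g i = D (a i, b (Suc j)) - D (a i, b j)" for i
    have "(\<Sum>i<p. w i j) = (\<Sum>i<p. g (Suc i) - g i)"
      by (intro sum.cong) (auto simp: w_def g_def Vol_def)
    also have "\<dots> = g p - g 0" by (rule sum_lessThan_telescope)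
    finally show ?thesis using that D0y D1y a0 ap by (simp add: g_def)
  qed
  have grounded: "grounded C"
    unfolding grounded_def C_def
    using hat_zero[of a] hat_zero[of b] apos bpos am bm by simp
  have C_s1: "C (s,1) = s" if "s \<in> {0..1}" for s
  proof -
    have "C (s,1) = (\<Sum>i<p. hat a i s * (\<Sum>j<q. w i j))"
      unfolding C_def using hat_one[of b] ble bm
      by (simp add: sum_distrib_left algebra_simps)
    also have "\<dots> = (\<Sum>i<p. hat a i s * (a (Suc i) - a i))"
      using rows by simp
    also have "\<dots> = s" using hat_sum[OF am a0 ap] that by simp
    finally show ?thesis .
  qed
  have C_1t: "C (1,t) = t" if "t \<in> {0..1}" for t
  proof -
    have "C (1,t) = (\<Sum>j<q. hat b j t * (\<Sum>i<p. w i j))"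
      unfolding C_def using hat_one[of a] ale am
      by (simp add: sum_distrib_left algebra_simps sum.swap[of _ "{..<p}"])
    also have "\<dots> = (\<Sum>j<q. hat b j t * (b (Suc j) - b j))"
      using cols by simp
    also have "\<dots> = t" using hat_sum[OF bm b0 bq] that by simp
    finally show ?thesis .
  qed
  have neutral: "neutral1 C" unfolding neutral1_def using C_s1 C_1t by simp
  have vol: "Vol C r \<ge> 0" if "is_rect r" for r
  proof -
    obtain s1 s2 t1 t2 where r: "r = (s1,s2,t1,t2)" by (cases r) auto
    with that have st: "s1 \<le> s2" "t1 \<le> t2" by (auto simp: is_rect_def)
    have "Vol C r = (\<Sum>i<p. \<Sum>j<q. w i j * (hat a i s2 - hat a i s1) * (hat b j t2 - hat b j t1))"
      unfolding r Vol_def C_def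
      by (simp add: sum_subtractf[symmetric] sum.distrib[symmetric] algebra_simps)
    also have "\<dots> \<ge> 0"
      using wpos hat_mono[of a _ s1 s2] hat_mono[of b _ t1 t2] am bm st
      by (intro sum_nonneg mult_nonneg_nonneg) auto
    finally show ?thesis .
  qed
  have copula: "copula C" unfolding copula_def using grounded neutral vol by simp
  have grid: "C (a k, b l) = D (a k, b l)" if "k \<le> p" "l \<le> q" for k l
  proof -
    have "C (a k, b l) = (\<Sum>i<p. \<Sum>j<q. w i j * (if i < k then 1 else 0) * (if j < l then 1 else 0))"
      unfolding C_def using hat_grid[OF am _ that(1)] hat_grid[OF bm _ that(2)] by simp
    also have "\<dots> = (\<Sum>i<p. if i < k then (\<Sum>j<q. if j < l then w i j else 0) else 0)"
      by (auto intro!: sum.cong)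
    also have "\<dots> = (\<Sum>i<k. \<Sum>j<l. w i j)"
      using that by (simp add: sum_if_less)
    also have "\<dots> = (\<Sum>i<k. D (a (Suc i), b l) - D (a i, b l))"
    proof (intro sum.cong refl)
      fix i assume i: "i \<in> {..<k}"
      define g where "g j = D (a (Suc i), b j) - D (a i, b j)" for j
      have "(\<Sum>j<l. w i j) = (\<Sum>j<l. g (Suc j) - g j)"
        by (intro sum.cong) (auto simp: w_def g_def Vol_def)
      also have "\<dots> = g l - g 0" by (rule sum_lessThan_telescope)
      finally show "(\<Sum>j<l. w i j) = D (a (Suc i), b l) - D (a i, b l)"
        using i that Dx0 b0 by (simp add: g_def)
    qed
    also have "\<dots> = D (a k, b l) - D (a 0, b l)" by (rule sum_lessThan_telescope)
    finally show ?thesis using D0y a0 that by simp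
  qed
  show ?thesis using copula grid by blast
qed



lemma grid_seq:
  fixes X :: "real set"
  assumes "finite X" "0 \<in> X" "1 \<in> X" "X \<subseteq> {0..1}"
  shows "\<exists>a p. (\<forall>i<p. a i < a (Suc i)) \<and> a 0 = 0 \<and> a p = 1 \<and> X = a ` {..p}"
proof -
  obtain xs where xs: "sorted_wrt (<) xs" "set xs = X"
    using finite_set_strict_sorted[OF assms(1)] by blast
  define n where "n = length xs"
  define p where "p = n - 1"
  have n1: "n \<ge> 1" using assms(2) xs(2) n_def by (cases xs) auto
  have lt: "xs ! i < xs ! j" if "i < j" "j < n" for i j
    using sorted_wrt_nth_less[OF xs(1) that(1)] that n_def by simp
  have inX: "xs ! i \<in> X" if "i < n" for i using that xs(2) n_def nth_mem by blast
  have a0: "xs ! 0 = 0"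
  proof -
    obtain k where k: "k < n" "xs ! k = 0" using assms(2) xs(2) n_def by (metis in_set_conv_nth)
    show ?thesis
    proof (cases "k = 0")
      case True then show ?thesis using k by simp
    next
      case False
      then have "xs ! 0 < 0" using lt[of 0 k] k by simp
      moreover have "xs ! 0 \<ge> 0" using inX[of 0] n1 assms(4) by auto
      ultimately show ?thesis by simp
    qed
  qed
  have ap: "xs ! p = 1"
  proof -
    obtain k where k: "k < n" "xs ! k = 1" using assms(3) xs(2) n_def by (metis in_set_conv_nth)
    show ?thesis
    proof (cases "k = p")
      case True then show ?thesis using k by simp
    next
      case False
      then have "k < p" using k p_def by simp
      then have "1 < xs ! p" using lt[of k p] k p_def n1 by simp
      moreover have "xs ! p \<le> 1" using inX[of p] n1 p_def assms(4) by auto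
      ultimately show ?thesis by simp
    qed
  qed
  have "X = (\<lambda>i. xs ! i) ` {..p}"
  proof -
    have "{..p} = {..<n}" using n1 p_def by auto
    have "X = {xs ! i | i. i < n}" using xs(2) set_conv_nth n_def by metis
    also have "\<dots> = (\<lambda>i. xs ! i) ` {..<n}" by auto
    finally show ?thesis using \<open>{..p} = {..<n}\<close> by simp
  qed
  moreover have "\<forall>i<p. xs ! i < xs ! Suc i" using lt p_def by simp
  ultimately show ?thesis using a0 ap by blast
qed

lemma bdry_eq:
  assumes "grounded lo" "neutral1 lo" "grounded hi" "neutral1 hi"
    "s \<in> {0..1}" "t \<in> {0..1}" "s = 0 \<or> s = 1 \<or> t = 0 \<or> t = 1"
  shows "lo (s,t) = hi (s,t)"
  using assms by (auto simp: grounded_def neutral1_def)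

lemma tmf_le:
  assumes "k = int n - int m" "lo y \<le> hi y"
  shows "tmf lo hi k y \<le> real n * hi y - real m * lo y"
proof -
  have k: "real_of_int k = real n - real m" using assms(1) by simp
  have e1: "real n * hi y - real m * lo y - of_int k * hi y = real m * (hi y - lo y)"
    unfolding k by (simp add: algebra_simps)
  have e2: "real n * hi y - real m * lo y - of_int k * lo y = real n * (hi y - lo y)"
    unfolding k by (simp add: algebra_simps)
  have nn: "real m * (hi y - lo y) \<ge> 0" "real n * (hi y - lo y) \<ge> 0" using assms(2) by auto
  have "tmf lo hi k y = of_int k * hi y \<or> tmf lo hi k y = of_int k * lo y" by (auto simp: tmf_def)
  then show ?thesis using e1 e2 nn by linarith
qed

lemma sum_corners_V:
  assumes "finite V"
  shows "(\<Sum>v\<in>V. of_int (mult_rect c v) * x v) = (\<Sum>q\<in>corners c \<inter> V. of_int (mult_rect c q) * x q)"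
proof (rule sum.mono_neutral_right)
  show "\<forall>i\<in>V - corners c \<inter> V. of_int (mult_rect c i) * x i = 0"
  proof
    fix i assume "i \<in> V - corners c \<inter> V"
    then have "i \<notin> corners c" by blast
    then show "of_int (mult_rect c i) * x i = 0" by (simp add: mult_rect_nz')
  qed
qed (use assms in auto)

lemma finite_copula:
  assumes gl: "grounded lo" "neutral1 lo" "grounded hi" "neutral1 hi"
    and lh: "\<forall>p\<in>unit_sq. lo p \<le> hi p" and LL: "\<forall>R. formal_union R \<longrightarrow> Lfun lo hi R \<ge> 0"
    and S: "finite S" "S \<subseteq> unit_sq"
  shows "\<exists>C. copula C \<and> (\<forall>p\<in>S. lo p \<le> C p \<and> C p \<le> hi p)"
proof -
  define Xs where "Xs = insert 0 (insert 1 (fst ` S))"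
  define Ys where "Ys = insert 0 (insert 1 (snd ` S))"
  have Xs01: "Xs \<subseteq> {0..1}" "Ys \<subseteq> {0..1}" using S(2) by (auto simp: Xs_def Ys_def unit_sq_def)
  obtain a p where a: "\<forall>i<p. a i < a (Suc i)" "a 0 = 0" "a p = 1" "Xs = a ` {..p}"
    using grid_seq[of Xs] S(1) Xs01 by (auto simp: Xs_def)
  obtain b q where b: "\<forall>j<q. b j < b (Suc j)" "b 0 = 0" "b q = 1" "Ys = b ` {..q}"
    using grid_seq[of Ys] S(1) Xs01 by (auto simp: Ys_def)
  define G where "G = Xs \<times> Ys"
  have finG: "finite G" using S(1) by (simp add: G_def Xs_def Ys_def)
  have Gsq: "G \<subseteq> unit_sq" using Xs01 by (auto simp: G_def unit_sq_def)
  have SG: "S \<subseteq> G" by (force simp: G_def Xs_def Ys_def)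
  define V where "V = {v \<in> G. fst v \<noteq> 0 \<and> fst v \<noteq> 1 \<and> snd v \<noteq> 0 \<and> snd v \<noteq> 1}"
  have finV: "finite V" using finG by (simp add: V_def)
  have VG: "V \<subseteq> G" by (auto simp: V_def)
  have bdG: "lo y = hi y" if "y \<in> G - V" for y
  proof -
    obtain s t where y: "y = (s,t)" by force
    have "s \<in> {0..1}" "t \<in> {0..1}" using that Gsq y by (auto simp: unit_sq_def)
    moreover have "s = 0 \<or> s = 1 \<or> t = 0 \<or> t = 1" using that y by (auto simp: V_def)
    ultimately show ?thesis using bdry_eq[OF gl] y by blast
  qed
  define cf where "cf ij = (a (fst ij), a (Suc (fst ij)), b (snd ij), b (Suc (snd ij)))" for ij
  define cells where "cells = cf ` ({..<p} \<times> {..<q})"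
  have fincells: "finite cells" by (simp add: cells_def)
  have cellsE: "\<exists>i j. i < p \<and> j < q \<and> c = (a i, a (Suc i), b j, b (Suc j))" if "c \<in> cells" for c
  proof -
    from that obtain ij where ij: "ij \<in> {..<p} \<times> {..<q}" "c = cf ij" unfolding cells_def by blast
    then have "fst ij < p" "snd ij < q" by (auto simp: mem_Times_iff)
    then show ?thesis using ij(2) unfolding cf_def by blast
  qed
  have cell_rect: "is_rect c" if cc: "c \<in> cells" for c
  proof -
    obtain i j where ij: "i < p" "j < q" "c = (a i, a (Suc i), b j, b (Suc j))"
      using cellsE[OF cc] by blast
    have "a i \<in> Xs" "a (Suc i) \<in> Xs" "b j \<in> Ys" "b (Suc j) \<in> Ys" using ij a(4) b(4) by auto
    then show ?thesis using ij a(1) b(1) Xs01 by (auto simp: is_rect_def)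
  qed
  have cell_G: "corners c \<subseteq> G" if cc: "c \<in> cells" for c
  proof -
    obtain i j where ij: "i < p" "j < q" "c = (a i, a (Suc i), b j, b (Suc j))"
      using cellsE[OF cc] by blast
    have "a i \<in> Xs" "a (Suc i) \<in> Xs" "b j \<in> Ys" "b (Suc j) \<in> Ys" using ij a(4) b(4) by auto
    then show ?thesis using ij by (auto simp: corners_def G_def)
  qed
  define bc where "bc c = (\<Sum>y\<in>corners c - V. of_int (mult_rect c y) * lo y)" for c
  define cellcon where "cellcon c = ((\<lambda>v. if v \<in> V then - mult_rect c v else 0), bc c)" for c
  define upc where "upc v = ((\<lambda>w. if w = v then 1 else 0) :: pt \<Rightarrow> int, hi v)" for v
  define lowc where "lowc v = ((\<lambda>w. if w = v then -1 else 0) :: pt \<Rightarrow> int, - lo v)" for v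
  define K where "K = cellcon ` cells \<union> upc ` V \<union> lowc ` V"
  have finK: "finite K" using fincells finV by (simp add: K_def)
  have van1: "fst (cellcon c) v = 0" if "v \<notin> V" for c v using that by (simp add: cellcon_def)
  have van2: "fst (upc w) v = 0" "fst (lowc w) v = 0" if "w \<in> V" "v \<notin> V" for w v
    using that by (auto simp: upc_def lowc_def)
  have van: "\<forall>c\<in>K. \<forall>v. v \<notin> V \<longrightarrow> fst c v = 0"
  proof (intro ballI allI impI)
    fix c v assume c: "c \<in> K" and v: "v \<notin> V"
    have "c \<in> cellcon ` cells \<or> c \<in> upc ` V \<or> c \<in> lowc ` V" using c unfolding K_def by blast
    then show "fst c v = 0"
    proof (elim disjE)
      assume "c \<in> cellcon ` cells"
      then obtain d where "c = cellcon d" by blast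
      then show ?thesis using van1[OF v] by simp
    next
      assume "c \<in> upc ` V"
      then obtain w where "w \<in> V" "c = upc w" by blast
      then show ?thesis using van2(1)[OF _ v] by simp
    next
      assume "c \<in> lowc ` V"
      then obtain w where "w \<in> V" "c = lowc w" by blast
      then show ?thesis using van2(2)[OF _ v] by simp
    qed
  qed
  have vanK: "\<forall>(a,b)\<in>K. \<forall>v. v \<notin> V \<longrightarrow> a v = 0"
  proof (clarify)
    fix \<alpha> \<beta> v assume "(\<alpha>, \<beta>) \<in> K" "v \<notin> V"
    then show "\<alpha> v = 0" using van[rule_format, of "(\<alpha>, \<beta>)" v] by simp
  qed
  from farkas[OF finV finK vanK] show ?thesis
  proof
    assume "\<exists>x. \<forall>(a,b)\<in>K. (\<Sum>v\<in>V. of_int (a v) * x v) \<le> b"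
    then obtain x where x: "\<forall>(a,b)\<in>K. (\<Sum>v\<in>V. of_int (a v) * x v) \<le> b" by blast
    define D where "D y = (if y \<in> V then x y else lo y)" for y
    have Dvol: "Vol D c \<ge> 0" if "c \<in> cells" for c
    proof -
      have "cellcon c \<in> K" using that by (simp add: K_def)
      then have "(\<Sum>v\<in>V. of_int (if v \<in> V then - mult_rect c v else 0) * x v) \<le> bc c"
        using x by (auto simp: cellcon_def)
      also have "(\<Sum>v\<in>V. of_int (if v \<in> V then - mult_rect c v else 0) * x v)
          = - (\<Sum>v\<in>V. of_int (mult_rect c v) * x v)"
        by (simp add: sum_negf[symmetric])
      finally have 1: "- (\<Sum>q\<in>corners c \<inter> V. of_int (mult_rect c q) * x q) \<le> bc c"
        by (simp add: sum_corners_V[OF finV])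
      have "Vol D c = (\<Sum>y\<in>corners c. of_int (mult_rect c y) * D y)"
        by (rule Vol_corners[OF cell_rect[OF that]])
      also have "\<dots> = (\<Sum>y\<in>corners c \<inter> V. of_int (mult_rect c y) * D y) + (\<Sum>y\<in>corners c - V. of_int (mult_rect c y) * D y)"
        by (rule sum.Int_Diff[OF finite_corners])
      also have "\<dots> = (\<Sum>y\<in>corners c \<inter> V. of_int (mult_rect c y) * x y) + bc c"
        unfolding bc_def by (simp add: D_def)
      finally show ?thesis using 1 by linarith
    qed
    have xb: "lo v \<le> x v \<and> x v \<le> hi v" if v: "v \<in> V" for v
    proof -
      have e: "(\<Sum>w\<in>V. of_int (if w = v then c else 0) * x w) = of_int c * x v" for c :: int
      proof -
        have "(\<Sum>w\<in>V. of_int (if w = v then c else 0) * x w) = (\<Sum>w\<in>V. if w = v then of_int c * x w else 0)"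
          by (intro sum.cong) auto
        also have "\<dots> = of_int c * x v" using v finV by (simp add: sum.delta)
        finally show ?thesis .
      qed
      have uK: "upc v \<in> K" and lK: "lowc v \<in> K" using v unfolding K_def by blast+
      have "case upc v of (a, b) \<Rightarrow> (\<Sum>w\<in>V. of_int (a w) * x w) \<le> b"
        by (rule bspec[OF x uK])
      moreover have "case lowc v of (a, b) \<Rightarrow> (\<Sum>w\<in>V. of_int (a w) * x w) \<le> b"
        by (rule bspec[OF x lK])
      ultimately have "(\<Sum>w\<in>V. of_int (if w = v then 1 else 0) * x w) \<le> hi v"
                "(\<Sum>w\<in>V. of_int (if w = v then -1 else 0) * x w) \<le> - lo v"
        by (simp_all only: upc_def lowc_def prod.case)
      then show ?thesis unfolding e by simp
    qed
    have ga: "a i \<in> {0..1}" if "i \<le> p" for i using that a(4) Xs01 by auto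
    have gb: "b j \<in> {0..1}" if "j \<le> q" for j using that b(4) Xs01 by auto
    have nV: "(s,t) \<notin> V" if "s = 0 \<or> s = 1 \<or> t = 0 \<or> t = 1" for s t using that by (auto simp: V_def)
    have "\<exists>C. copula C \<and> (\<forall>i\<le>p. \<forall>j\<le>q. C (a i, b j) = D (a i, b j))"
    proof (rule interp_copula[OF a(1-3) b(1-3)])
      show "\<forall>i\<le>p. D (a i, 0) = 0" "\<forall>i\<le>p. D (a i, 1) = a i"
        using gl ga nV by (auto simp: D_def grounded_def neutral1_def)
      show "\<forall>j\<le>q. D (0, b j) = 0" "\<forall>j\<le>q. D (1, b j) = b j"
        using gl gb nV by (auto simp: D_def grounded_def neutral1_def)
      show "\<forall>i<p. \<forall>j<q. 0 \<le> Vol D (a i, a (Suc i), b j, b (Suc j))"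
      proof (intro allI impI)
        fix i j assume "i < p" "j < q"
        then have "cf (i,j) \<in> cells" unfolding cells_def by (intro imageI) simp
        from Dvol[OF this] show "0 \<le> Vol D (a i, a (Suc i), b j, b (Suc j))" by (simp add: cf_def)
      qed
    qed
    then obtain C where C: "copula C" "\<forall>i\<le>p. \<forall>j\<le>q. C (a i, b j) = D (a i, b j)" by blast
    have "lo y \<le> C y \<and> C y \<le> hi y" if "y \<in> S" for y
    proof -
      have yG: "y \<in> G" using that SG by auto
      then obtain i j where ij: "i \<le> p" "j \<le> q" "y = (a i, b j)"
        using a(4) b(4) by (auto simp: G_def)
      then have "C y = D y" using C(2) by simp
      moreover have "lo y \<le> hi y" using lh yG Gsq by auto
      ultimately show ?thesis using xb by (auto simp: D_def)
    qed
    then show ?thesis using C(1) by blast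
  next
    assume "\<exists>\<beta><0. ((\<lambda>v. 0), \<beta>) \<in> cone K"
    then obtain \<beta> where \<beta>: "\<beta> < 0" "((\<lambda>v. 0), \<beta>) \<in> cone K" by blast
    have inv: "\<exists>R (\<nu>::pt \<Rightarrow> nat) (\<mu>::pt \<Rightarrow> nat). set R \<subseteq> cells \<and>
        (\<forall>v\<in>V. \<alpha> v = - mult R v + int (\<nu> v) - int (\<mu> v)) \<and>
        \<beta>' = (\<Sum>c\<leftarrow>R. bc c) + (\<Sum>v\<in>V. real (\<nu> v) * hi v - real (\<mu> v) * lo v)"
      if "(\<alpha>, \<beta>') \<in> cone K" for \<alpha> \<beta>'
      using that
    proof (induction rule: cone.induct)
      case cone_zero
      show ?case by (rule exI[of _ "[]"], rule exI[of _ "\<lambda>_. 0"], rule exI[of _ "\<lambda>_. 0"]) simp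
    next
      case (cone_add a1 b1 a2 b2)
      then obtain R \<nu> \<mu> where IH: "set R \<subseteq> cells" "\<forall>v\<in>V. a2 v = - mult R v + int (\<nu> v) - int (\<mu> v)"
          "b2 = (\<Sum>c\<leftarrow>R. bc c) + (\<Sum>v\<in>V. real (\<nu> v) * hi v - real (\<mu> v) * lo v)" by blast
      from cone_add(1) consider (c) c where "c \<in> cells" "(a1,b1) = cellcon c"
        | (u) v0 where "v0 \<in> V" "(a1,b1) = upc v0" | (l) v0 where "v0 \<in> V" "(a1,b1) = lowc v0"
        by (auto simp: K_def)
      then show ?case
      proof cases
        case c
        show ?thesis
        proof (rule exI[of _ "c#R"], rule exI[of _ \<nu>], rule exI[of _ \<mu>], intro conjI)
          show "set (c#R) \<subseteq> cells" using c IH by auto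
          show "\<forall>v\<in>V. a1 v + a2 v = - mult (c # R) v + int (\<nu> v) - int (\<mu> v)"
            using c IH by (auto simp: cellcon_def)
          show "b1 + b2 = (\<Sum>c\<leftarrow>c # R. bc c) + (\<Sum>v\<in>V. real (\<nu> v) * hi v - real (\<mu> v) * lo v)"
            using c IH by (auto simp: cellcon_def)
        qed
      next
        case u
        show ?thesis
        proof (rule exI[of _ R], rule exI[of _ "\<lambda>v. \<nu> v + (if v = v0 then 1 else 0)"], rule exI[of _ \<mu>], intro conjI)
          show "set R \<subseteq> cells" using IH by auto
          show "\<forall>v\<in>V. a1 v + a2 v = - mult R v + int (\<nu> v + (if v = v0 then 1 else 0)) - int (\<mu> v)"
            using u IH by (auto simp: upc_def)
          have "(\<Sum>v\<in>V. real (\<nu> v + (if v = v0 then 1 else 0)) * hi v - real (\<mu> v) * lo v)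
              = (\<Sum>v\<in>V. real (\<nu> v) * hi v - real (\<mu> v) * lo v) + (\<Sum>v\<in>V. if v = v0 then hi v else 0)"
            unfolding sum.distrib[symmetric] by (intro sum.cong) (auto simp: algebra_simps)
          also have "(\<Sum>v\<in>V. if v = v0 then hi v else 0) = hi v0" using u finV by (simp add: sum.delta)
          finally show "b1 + b2 = (\<Sum>c\<leftarrow>R. bc c) + (\<Sum>v\<in>V. real (\<nu> v + (if v = v0 then 1 else 0)) * hi v - real (\<mu> v) * lo v)"
            using u IH by (simp add: upc_def)
        qed
      next
        case l
        show ?thesis
        proof (rule exI[of _ R], rule exI[of _ \<nu>], rule exI[of _ "\<lambda>v. \<mu> v + (if v = v0 then 1 else 0)"], intro conjI)
          show "set R \<subseteq> cells" using IH by auto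
          show "\<forall>v\<in>V. a1 v + a2 v = - mult R v + int (\<nu> v) - int (\<mu> v + (if v = v0 then 1 else 0))"
            using l IH by (auto simp: lowc_def)
          have "(\<Sum>v\<in>V. real (\<nu> v) * hi v - real (\<mu> v + (if v = v0 then 1 else 0)) * lo v)
              = (\<Sum>v\<in>V. real (\<nu> v) * hi v - real (\<mu> v) * lo v) - (\<Sum>v\<in>V. if v = v0 then lo v else 0)"
            unfolding sum_subtractf[symmetric] by (intro sum.cong) (auto simp: algebra_simps)
          also have "(\<Sum>v\<in>V. if v = v0 then lo v else 0) = lo v0" using l finV by (simp add: sum.delta)
          finally show "b1 + b2 = (\<Sum>c\<leftarrow>R. bc c) + (\<Sum>v\<in>V. real (\<nu> v) * hi v - real (\<mu> v + (if v = v0 then 1 else 0)) * lo v)"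
            using l IH by (simp add: lowc_def)
        qed
      qed
    qed
    obtain R \<nu> \<mu> where R: "set R \<subseteq> cells" "\<forall>v\<in>V. 0 = - mult R v + int (\<nu> v) - int (\<mu> v)"
        "\<beta> = (\<Sum>c\<leftarrow>R. bc c) + (\<Sum>v\<in>V. real (\<nu> v) * hi v - real (\<mu> v) * lo v)"
      using inv[OF \<beta>(2)] by blast
    have fu: "formal_union R" using R(1) cell_rect by (auto simp: formal_union_def)
    have cRG: "cornersR R \<subseteq> G" unfolding cornersR_def using R(1) cell_G by blast
    have bcsum: "(\<Sum>c\<leftarrow>R'. bc c) = (\<Sum>y\<in>G - V. of_int (mult R' y) * lo y)" if "set R' \<subseteq> cells" for R'
      using that
    proof (induction R')
      case Nil then show ?case by simp
    next
      case (Cons c R')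
      have cG: "corners c \<subseteq> G" using cell_G Cons(2) by simp
      have "bc c = (\<Sum>y\<in>G - V. of_int (mult_rect c y) * lo y)"
        unfolding bc_def
      proof (rule sum.mono_neutral_left)
        show "finite (G - V)" using finG by simp
        show "corners c - V \<subseteq> G - V" using cG by blast
        show "\<forall>i\<in>G - V - (corners c - V). of_int (mult_rect c i) * lo i = 0"
        proof
          fix i assume "i \<in> G - V - (corners c - V)"
          then have "i \<notin> corners c" by blast
          then show "of_int (mult_rect c i) * lo i = 0" by (simp add: mult_rect_nz')
        qed
      qed
      then show ?case using Cons by (simp add: sum.distrib distrib_right)
    qed
    have "Lfun lo hi R = (\<Sum>y\<in>G. tmf lo hi (mult R y) y)" by (rule Lfun_sum[OF finG cRG])
    also have "\<dots> = (\<Sum>y\<in>V. tmf lo hi (mult R y) y) + (\<Sum>y\<in>G - V. tmf lo hi (mult R y) y)"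
      using sum.subset_diff[OF VG finG, of "\<lambda>y. tmf lo hi (mult R y) y"] by linarith
    also have "(\<Sum>y\<in>G - V. tmf lo hi (mult R y) y) = (\<Sum>y\<in>G - V. of_int (mult R y) * lo y)"
      using bdG by (intro sum.cong) (auto simp: tmf_def)
    also have "(\<Sum>y\<in>V. tmf lo hi (mult R y) y) \<le> (\<Sum>v\<in>V. real (\<nu> v) * hi v - real (\<mu> v) * lo v)"
    proof (rule sum_mono)
      fix v assume v: "v \<in> V"
      then have "mult R v = int (\<nu> v) - int (\<mu> v)" using R(2) by auto
      moreover have "lo v \<le> hi v" using lh v VG Gsq by auto
      ultimately show "tmf lo hi (mult R v) v \<le> real (\<nu> v) * hi v - real (\<mu> v) * lo v"
        by (rule tmf_le)
    qed
    finally have "Lfun lo hi R \<le> \<beta>" using R(3) bcsum[OF R(1)] by linarith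
    moreover have "Lfun lo hi R \<ge> 0" using LL fu by blast
    ultimately show ?thesis using \<beta>(1) by linarith
  qed
qed



lemma copula_restrict:
  assumes "copula C"
  shows "copula (\<lambda>p. if p \<in> unit_sq then C p else 0)"
proof -
  define f where "f = (\<lambda>p. if p \<in> unit_sq then C p else 0)"
  have "Vol f r = Vol C r" if "is_rect r" for r
  proof -
    obtain s1 s2 t1 t2 where r: "r = (s1,s2,t1,t2)" by (cases r) auto
    then have "(s1,t1) \<in> unit_sq" "(s2,t2) \<in> unit_sq" "(s1,t2) \<in> unit_sq" "(s2,t1) \<in> unit_sq"
      using that by (auto simp: is_rect_def unit_sq_def)
    then show ?thesis by (simp add: Vol_def r f_def)
  qed
  moreover have "\<forall>r. is_rect r \<longrightarrow> Vol C r \<ge> 0" using assms by (simp add: copula_def)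
  moreover have "grounded f" using assms unfolding f_def copula_def grounded_def by (simp add: unit_sq_def)
  moreover have "neutral1 f" using assms unfolding f_def copula_def neutral1_def by (simp add: unit_sq_def)
  ultimately have "copula f" unfolding copula_def by simp
  then show ?thesis by (simp add: f_def)
qed

lemma copula_range:
  assumes "copula C" "p \<in> unit_sq"
  shows "0 \<le> C p \<and> C p \<le> 1"
proof -
  obtain s t where p: "p = (s,t)" by force
  have st: "0 \<le> s" "s \<le> 1" "0 \<le> t" "t \<le> 1" using assms(2) p by (auto simp: unit_sq_def)
  have g: "C (x,0) = 0" "C (0,x) = 0" "C (x,1) = x" "C (1,x) = x" if "x \<in> {0..1}" for x
    using assms(1) that by (auto simp: copula_def grounded_def neutral1_def)
  have V: "Vol C r \<ge> 0" if "is_rect r" for r using assms(1) that unfolding copula_def by blast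
  have lo: "0 \<le> C (s,t)"
  proof (cases "s = 0 \<or> t = 0")
    case True then show ?thesis using g st by auto
  next
    case False
    then have "is_rect (0,s,0,t)" using st by (auto simp: is_rect_def)
    from V[OF this] show ?thesis using g st by (simp add: Vol_def)
  qed
  have up: "C (s,t) \<le> s"
  proof (cases "s = 0 \<or> t = 1")
    case True then show ?thesis using g st by auto
  next
    case False
    then have "is_rect (0,s,t,1)" using st by (auto simp: is_rect_def)
    from V[OF this] show ?thesis using g st by (simp add: Vol_def)
  qed
  show ?thesis unfolding p using lo up st by simp
qed

lemma closedin_forall:
  assumes "\<And>i. closedin X {x \<in> topspace X. P i x}"
  shows "closedin X {x \<in> topspace X. \<forall>i. P i x}"
proof -
  have eq: "{x \<in> topspace X. \<forall>i. P i x} = \<Inter> (range (\<lambda>i. {x \<in> topspace X. P i x}))" by auto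
  show ?thesis unfolding eq by (rule closedin_Inter) (auto simp: assms)
qed

lemma closedin_conj:
  assumes "closedin X {x \<in> topspace X. P x}" "closedin X {x \<in> topspace X. Q x}"
  shows "closedin X {x \<in> topspace X. P x \<and> Q x}"
proof -
  have eq: "{x \<in> topspace X. P x \<and> Q x} = {x \<in> topspace X. P x} \<inter> {x \<in> topspace X. Q x}" by auto
  show ?thesis unfolding eq by (rule closedin_Int[OF assms])
qed

lemma closedin_imp:
  "closedin X {x \<in> topspace X. Q x} \<Longrightarrow> closedin X {x \<in> topspace X. c \<longrightarrow> Q x}"
  by (cases c) auto

lemma exists_copula:
  assumes a: "grounded lo" "neutral1 lo" "grounded hi" "neutral1 hi"
    "\<forall>p\<in>unit_sq. lo p \<le> hi p" "\<forall>R. formal_union R \<longrightarrow> Lfun lo hi R \<ge> 0"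
  shows "\<exists>C. copula C \<and> (\<forall>p\<in>unit_sq. lo p \<le> C p \<and> C p \<le> hi p)"
proof -
  define X where "X = product_topology (\<lambda>_::pt. top_of_set {0..1::real}) UNIV"
  have tsX: "topspace X = {f. \<forall>p. f p \<in> {0..1}}" by (auto simp: X_def PiE_def Pi_def)
  have comp: "compact_space X" unfolding X_def
    by (subst compact_space_product_topology) (auto intro: compact_space_subtopology)
  have proj: "continuous_map X euclideanreal (\<lambda>f. f p)" for p
    unfolding X_def by (rule continuous_map_into_fulltopology[OF continuous_map_product_projection[of p UNIV "\<lambda>_. top_of_set {0..1::real}"]]) simp
  have cl: "closedin X {f \<in> topspace X. g f \<in> T}" if "continuous_map X euclideanreal g" "closed T" for g T
    using closedin_continuous_map_preimage[OF that(1) closed_closedin[THEN iffD1, OF that(2)]] .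
  have cl_eq: "closedin X {f \<in> topspace X. f q = c}" for q c
    using cl[OF proj[of q], of "{c}"] by simp
  have cl_le: "closedin X {f \<in> topspace X. f q \<le> c}" for q c
    using cl[OF proj[of q], of "{..c}"] by simp
  have cl_ge: "closedin X {f \<in> topspace X. c \<le> f q}" for q c
    using cl[OF proj[of q], of "{c..}"] by simp
  have cl_vol: "closedin X {f \<in> topspace X. 0 \<le> Vol f r}" for r
  proof -
    obtain s1 s2 t1 t2 where r: "r = (s1,s2,t1,t2)" by (cases r) auto
    have "continuous_map X euclideanreal (\<lambda>f. f (s1,t1) + f (s2,t2) - f (s2,t1) - f (s1,t2))"
      by (intro continuous_map_add continuous_map_diff proj)
    from cl[OF this, of "{0..}"] show ?thesis by (simp add: Vol_def r)
  qed
  define Cop where "Cop = {f \<in> topspace X. copula f}"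
  have Cop_eq: "Cop = {f \<in> topspace X. (\<forall>x. x \<in> {0..1} \<longrightarrow> f (x,0) = 0) \<and> (\<forall>x. x \<in> {0..1} \<longrightarrow> f (0,x) = 0)
     \<and> (\<forall>x. x \<in> {0..1} \<longrightarrow> f (x,1) = x) \<and> (\<forall>x. x \<in> {0..1} \<longrightarrow> f (1,x) = x) \<and> (\<forall>r. is_rect r \<longrightarrow> 0 \<le> Vol f r)}"
    by (auto simp: Cop_def copula_def grounded_def neutral1_def)
  have clCop: "closedin X Cop" unfolding Cop_eq
    by (intro closedin_conj closedin_forall closedin_imp cl_eq cl_vol)
  define Bd where "Bd p = Cop \<inter> {f \<in> topspace X. lo p \<le> f p \<and> f p \<le> hi p}" for p
  have clBd: "closedin X (Bd p)" for p
    unfolding Bd_def by (intro closedin_Int clCop closedin_conj cl_le cl_ge)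
  have fip: "\<forall>F. finite F \<and> F \<subseteq> Bd ` unit_sq \<longrightarrow> \<Inter> F \<noteq> {}"
  proof (intro allI impI)
    fix F assume F: "finite F \<and> F \<subseteq> Bd ` unit_sq"
    then obtain S where S: "S \<subseteq> unit_sq" "finite S" "F = Bd ` S"
      by (meson finite_subset_image)
    obtain C where C: "copula C" "\<forall>p\<in>S. lo p \<le> C p \<and> C p \<le> hi p"
      using finite_copula[OF a S(2,1)] by blast
    define f where "f p = (if p \<in> unit_sq then C p else 0)" for p
    have fts: "f \<in> topspace X" using copula_range[OF C(1)] by (auto simp: tsX f_def)
    have "copula f" unfolding f_def by (rule copula_restrict[OF C(1)])
    then have "f \<in> Bd p" if "p \<in> S" for p
      using fts that C(2) S(1) by (auto simp: Bd_def Cop_def f_def)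
    then show "\<Inter> F \<noteq> {}" using S(3) by blast
  qed
  have "\<Inter> (Bd ` unit_sq) \<noteq> {}"
    using comp[unfolded compact_space_fip, rule_format, of "Bd ` unit_sq"] clBd fip by blast
  then obtain f where f: "\<forall>p\<in>unit_sq. f \<in> Bd p" by blast
  have "(0,0) \<in> unit_sq" by (simp add: unit_sq_def)
  then have "copula f" using f by (auto simp: Bd_def Cop_def)
  moreover have "\<forall>p\<in>unit_sq. lo p \<le> f p \<and> f p \<le> hi p" using f by (auto simp: Bd_def)
  ultimately show ?thesis by blast
qed



lemma tmf_upd_lo:
  "tmf (lo(x0 := v)) hi k y = tmf lo hi k y + (if y = x0 then (if k < 0 then (v - lo x0) * of_int k else 0) else 0)"
  by (auto simp: tmf_def algebra_simps)

lemma tmf_upd_hi: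
  "tmf lo (hi(x0 := v)) k y = tmf lo hi k y + (if y = x0 then (if k > 0 then (v - hi x0) * of_int k else 0) else 0)"
  by (auto simp: tmf_def algebra_simps)

lemma Lfun_upd_lo:
  "Lfun (lo(x0 := v)) hi R = Lfun lo hi R + (if mult R x0 < 0 then (v - lo x0) * of_int (mult R x0) else 0)"
proof -
  define Y where "Y = insert x0 (cornersR R)"
  have fY: "finite Y" "cornersR R \<subseteq> Y" "x0 \<in> Y" by (auto simp: Y_def)
  show ?thesis
    unfolding Lfun_sum[OF fY(1,2)] tmf_upd_lo sum.distrib
    using fY(1,3) by (simp add: sum.delta)
qed

lemma Lfun_upd_hi:
  "Lfun lo (hi(x0 := v)) R = Lfun lo hi R + (if mult R x0 > 0 then (v - hi x0) * of_int (mult R x0) else 0)"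
proof -
  define Y where "Y = insert x0 (cornersR R)"
  have fY: "finite Y" "cornersR R \<subseteq> Y" "x0 \<in> Y" by (auto simp: Y_def)
  show ?thesis
    unfolding Lfun_sum[OF fY(1,2)] tmf_upd_hi sum.delta sum.distrib
    using fY(1,3) by (simp add: sum.delta)
qed

lemma grounded_upd: "grounded A \<Longrightarrow> grounded B \<Longrightarrow> grounded (A(x0 := B x0))"
  by (auto simp: grounded_def)

lemma neutral1_upd: "neutral1 A \<Longrightarrow> neutral1 B \<Longrightarrow> neutral1 (A(x0 := B x0))"
  by (auto simp: neutral1_def)

lemma qc_parts: "quasi_copula A \<Longrightarrow> grounded A \<and> neutral1 A"
  by (simp add: quasi_copula_def)

theorem mainTheorem18:
  fixes A B :: "real \<times> real \<Rightarrow> real"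
  assumes "quasi_copula A" and "quasi_copula B"
    and "\<forall>x\<in>unit_sq. A x \<le> B x"
    and "copulas_between A B \<noteq> {}"
  shows "((\<forall>x\<in>unit_sq. B x = (SUP C\<in>copulas_between A B. C x)) \<longleftrightarrow>
           (\<forall>x\<in>unit_sq. ereal (B x - A x) \<le> P_O A B x))
       \<and> ((\<forall>x\<in>unit_sq. A x = (INF C\<in>copulas_between A B. C x)) \<longleftrightarrow>
           (\<forall>x\<in>unit_sq. ereal (B x - A x) \<le> P_M A B x))"
proof -
  let ?CB = "copulas_between A B"
  have gA: "grounded A" "neutral1 A" and gB: "grounded B" "neutral1 B"
    using qc_parts assms(1,2) by auto
  obtain C0 where C0: "C0 \<in> ?CB" using assms(4) by blast
  have CBprop: "\<forall>r. is_rect r \<longrightarrow> Vol C r \<ge> 0" "\<forall>y\<in>unit_sq. A y \<le> C y \<and> C y \<le> B y"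
    if "C \<in> ?CB" for C
    using that by (auto simp: copulas_between_def copula_def)
  have LAB: "Lfun A B R \<ge> 0" if "formal_union R" for R
    using Lfun_nonneg[OF that CBprop[OF C0]] .
  have bddA: "bdd_above ((\<lambda>C. C x) ` ?CB)" if "x \<in> unit_sq" for x
    using that by (intro bdd_aboveI[of _ "B x"]) (auto simp: copulas_between_def)
  have bddB: "bdd_below ((\<lambda>C. C x) ` ?CB)" if "x \<in> unit_sq" for x
    using that by (intro bdd_belowI[of _ "A x"]) (auto simp: copulas_between_def)
  have partA: "(\<forall>x\<in>unit_sq. B x = (SUP C\<in>?CB. C x)) \<longleftrightarrow>
           (\<forall>x\<in>unit_sq. ereal (B x - A x) \<le> P_O A B x)"
  proof
    assume H: "\<forall>x\<in>unit_sq. B x = (SUP C\<in>?CB. C x)"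
    show "\<forall>x\<in>unit_sq. ereal (B x - A x) \<le> P_O A B x"
    proof
      fix x assume x: "x \<in> unit_sq"
      show "ereal (B x - A x) \<le> P_O A B x"
        unfolding P_O_def
      proof (rule Inf_greatest, clarify)
        fix R assume R: "formal_union R" "mult R x < 0"
        let ?m = "real_of_int (- mult R x)"
        have mpos: "?m > 0" using R by simp
        have "C x \<le> A x + Lfun A B R / ?m" if "C \<in> ?CB" for C
        proof -
          have "Lfun A B R \<ge> tmf A B (mult R x) x - of_int (mult R x) * C x"
            by (rule Lfun_lower[OF R(1) CBprop[OF that]])
          then have "Lfun A B R \<ge> (C x - A x) * ?m" using R by (simp add: tmf_def algebra_simps)
          then show ?thesis using mpos by (simp add: field_simps)
        qed
        then have "(SUP C\<in>?CB. C x) \<le> A x + Lfun A B R / ?m"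
          using assms(4) by (intro cSUP_least) auto
        then show "ereal (B x - A x) \<le> ereal (Lfun A B R / real_of_int (- mult R x))"
          using H x by simp
      qed
    qed
  next
    assume H: "\<forall>x\<in>unit_sq. ereal (B x - A x) \<le> P_O A B x"
    show "\<forall>x\<in>unit_sq. B x = (SUP C\<in>?CB. C x)"
    proof
      fix x0 assume x0: "x0 \<in> unit_sq"
      define lo where "lo = A(x0 := B x0)"
      have "\<exists>C. copula C \<and> (\<forall>p\<in>unit_sq. lo p \<le> C p \<and> C p \<le> B p)"
      proof (rule exists_copula)
        show "grounded lo" "neutral1 lo" unfolding lo_def
          using grounded_upd neutral1_upd gA gB by auto
        show "grounded B" "neutral1 B" using gB by auto
        show "\<forall>p\<in>unit_sq. lo p \<le> B p" using assms(3) by (simp add: lo_def)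
        show "\<forall>R. formal_union R \<longrightarrow> 0 \<le> Lfun lo B R"
        proof (intro allI impI)
          fix R assume R: "formal_union R"
          show "0 \<le> Lfun lo B R"
          proof (cases "mult R x0 < 0")
            case False
            then show ?thesis using LAB[OF R] by (simp add: lo_def Lfun_upd_lo)
          next
            case True
            have "P_O A B x0 \<le> ereal (Lfun A B R / real_of_int (- mult R x0))"
              unfolding P_O_def using R True by (intro Inf_lower) auto
            with H x0 have "B x0 - A x0 \<le> Lfun A B R / real_of_int (- mult R x0)"
              by (metis ereal_less_eq(3) order_trans)
            then have "(B x0 - A x0) * real_of_int (- mult R x0) \<le> Lfun A B R"
              using True by (simp add: field_simps)
            then show ?thesis using True by (simp add: lo_def Lfun_upd_lo algebra_simps)
          qed
        qed
      qed
      then obtain C where C: "copula C" "\<forall>p\<in>unit_sq. lo p \<le> C p \<and> C p \<le> B p" by blast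
      have CC: "C \<in> ?CB" unfolding copulas_between_def
        using C assms(3) by (auto simp: lo_def split: if_splits) (metis fun_upd_apply order_trans)
      have "C x0 = B x0" using C(2) x0 by (force simp: lo_def)
      moreover have "C x0 \<le> (SUP C\<in>?CB. C x0)" using CC bddA[OF x0] by (rule cSUP_upper)
      moreover have "(SUP C\<in>?CB. C x0) \<le> B x0"
        using assms(4) x0 by (intro cSUP_least) (auto simp: copulas_between_def)
      ultimately show "B x0 = (SUP C\<in>?CB. C x0)" by linarith
    qed
  qed
  have partB: "(\<forall>x\<in>unit_sq. A x = (INF C\<in>?CB. C x)) \<longleftrightarrow>
           (\<forall>x\<in>unit_sq. ereal (B x - A x) \<le> P_M A B x)"
  proof
    assume H: "\<forall>x\<in>unit_sq. A x = (INF C\<in>?CB. C x)"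
    show "\<forall>x\<in>unit_sq. ereal (B x - A x) \<le> P_M A B x"
    proof
      fix x assume x: "x \<in> unit_sq"
      show "ereal (B x - A x) \<le> P_M A B x"
        unfolding P_M_def
      proof (rule Inf_greatest, clarify)
        fix R assume R: "formal_union R" "mult R x > 0"
        let ?m = "real_of_int (mult R x)"
        have mpos: "?m > 0" using R by simp
        have "B x - Lfun A B R / ?m \<le> C x" if "C \<in> ?CB" for C
        proof -
          have "Lfun A B R \<ge> tmf A B (mult R x) x - of_int (mult R x) * C x"
            by (rule Lfun_lower[OF R(1) CBprop[OF that]])
          then have "Lfun A B R \<ge> (B x - C x) * ?m" using R by (simp add: tmf_def algebra_simps)
          then show ?thesis using mpos by (simp add: field_simps)
        qed
        then have "B x - Lfun A B R / ?m \<le> (INF C\<in>?CB. C x)"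
          using assms(4) by (intro cINF_greatest) auto
        then show "ereal (B x - A x) \<le> ereal (Lfun A B R / real_of_int (mult R x))"
          using H x by simp
      qed
    qed
  next
    assume H: "\<forall>x\<in>unit_sq. ereal (B x - A x) \<le> P_M A B x"
    show "\<forall>x\<in>unit_sq. A x = (INF C\<in>?CB. C x)"
    proof
      fix x0 assume x0: "x0 \<in> unit_sq"
      define hi where "hi = B(x0 := A x0)"
      have "\<exists>C. copula C \<and> (\<forall>p\<in>unit_sq. A p \<le> C p \<and> C p \<le> hi p)"
      proof (rule exists_copula)
        show "grounded hi" "neutral1 hi" unfolding hi_def
          using grounded_upd neutral1_upd gA gB by auto
        show "grounded A" "neutral1 A" using gA by auto
        show "\<forall>p\<in>unit_sq. A p \<le> hi p" using assms(3) by (simp add: hi_def)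
        show "\<forall>R. formal_union R \<longrightarrow> 0 \<le> Lfun A hi R"
        proof (intro allI impI)
          fix R assume R: "formal_union R"
          show "0 \<le> Lfun A hi R"
          proof (cases "mult R x0 > 0")
            case False
            then show ?thesis using LAB[OF R] by (simp add: hi_def Lfun_upd_hi)
          next
            case True
            have "P_M A B x0 \<le> ereal (Lfun A B R / real_of_int (mult R x0))"
              unfolding P_M_def using R True by (intro Inf_lower) auto
            with H x0 have "B x0 - A x0 \<le> Lfun A B R / real_of_int (mult R x0)"
              by (metis ereal_less_eq(3) order_trans)
            then have "(B x0 - A x0) * real_of_int (mult R x0) \<le> Lfun A B R"
              using True by (simp add: field_simps)
            then show ?thesis using True by (simp add: hi_def Lfun_upd_hi algebra_simps)
          qed
        qed
      qed
      then obtain C where C: "copula C" "\<forall>p\<in>unit_sq. A p \<le> C p \<and> C p \<le> hi p" by blast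
      have CC: "C \<in> ?CB" unfolding copulas_between_def
        using C assms(3) by (auto simp: hi_def split: if_splits) (metis fun_upd_apply order_trans)
      have "C x0 = A x0" using C(2) x0 by (force simp: hi_def)
      moreover have "(INF C\<in>?CB. C x0) \<le> C x0" using bddB[OF x0] CC by (rule cINF_lower)
      moreover have "A x0 \<le> (INF C\<in>?CB. C x0)"
        using assms(4) x0 by (intro cINF_greatest) (auto simp: copulas_between_def)
      ultimately show "A x0 = (INF C\<in>?CB. C x0)" by linarith
    qed
  qed
  show ?thesis using partA partB by blast
qed


end
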